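(* Let $V$ be an inhomogeneous $Y$-random evolution, $s\in J$ and $\omega \in \Omega$. Then $V(\cdot,\cdot)(\omega)$ is an inhomogeneous $Y$-semigroup. Further, if $V$ is regular, then $u \mapsto V(s,u)(\omega)$ is $Y$-strongly RCLL on $J(s)$, i.e. for every $f \in Y$, $u \mapsto V(s,u)(\omega)f$ belongs to $D(J(s),(Y,\|\cdot\|))$; more precisely, for $f \in Y$, \[ V(s,u^-)f=V(s,u)f \ \text{ if } u \notin \{T_{n}(s): n \in \mathbb{N}\},\qquad V(s, T_{n+1}(s))f= V(s, T_{n+1}(s)^-) D(x_{n}(s),x_{n+1}(s))f \ \ \forall n \in \mathbb{N}, \] where $V(s,t^-)f:=\lim_{u \uparrow t} V(s,u)f$.
   Context: $(Y,\|\cdot\|)$ is a real separable Banach space with Borel $\sigma$-algebra $\mathcal Y$, $(Y_1,\|\cdot\|_{Y_1})$ a real separable Banach space continuously embedded in $Y$; $J$ is $\mathbb{R}^+$ or $[0,T_\infty]$, $\Delta_J=\{(s,t)\in J^2:s\le t\}$, $J(s)=\{t\in J:t\ge s\}$; $D(J(s),Y)$ is the space of right-continuous functions with left limits. An inhomogeneous $Y$-semigroup is a map $\Gamma:\Delta_J\to\mathcal B(Y)$ with $\Gamma(t,t)=I$ and $\Gamma(s,r)\Gamma(r,t)=\Gamma(s,t)$ for $s\le r\le t$. Generator: $\mathcal D(A_\Gamma(t))$ is the set of $f\in Y$ such that $\lim_{h\downarrow0,\,t+h\in J}h^{-1}(\Gamma(t,t+h)-I)f$ and $\lim_{h\downarrow0,\,t-h\in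 J}h^{-1}(\Gamma(t-h,t)-I)f$ exist and are equal ($=A_\Gamma(t)f$), $\mathcal D(A_\Gamma)=\bigcap_t\mathcal D(A_\Gamma(t))$. $\Gamma$ is regular if $Y_1\subseteq\mathcal D(A_\Gamma)$; $\Gamma(s,t)Y_1\subseteq Y_1$ and $u\mapsto\Gamma(u,t)f$ is $\|\cdot\|_{Y_1}$-continuous for $f\in Y_1$; $u\mapsto\Gamma(s,u)f$ is $Y$-continuous on $J(s)$ for $f\in Y$; and $u\mapsto\Gamma(s,u)A_\Gamma(u)f$ is Bochner integrable on $[s,t]$ for $f\in Y_1$. Probabilistic setting: $(\Omega,\mathcal F,\mathbb P)$ complete; $X$ finite with all subsets as $\sigma$-algebra $\mathcal X$; $(x_n,T_n)_{n\ge0}$ a Markov renewal process ($x_n\in X$, $T_0=0$, $T_n=\sum_{k\le n}\tau_k$, $\tau_k>0$) with semi-Markov kernel $Q$; $N(t)=\sup\{n:T_n\le t\}$, $\Omega$ restricted to the full-measure event $\{N(t)<\infty\ \forall t\in\mathbb Q\}$; $x(t)=x_{N(t)}$; $N_s(t)=N(t)-N(s)$, $T_0(s)=s$, $T_n(s)=T_{N(s)+n}$ ($n\ge1$), $x_n(s)=x(T_n(s))$. $(\Gamma_x)_{x\in X}$ inhomogeneous $Y$-semigroups with generators $A_x$, with $(r,t,x,f)\mapsto\Gamma_x(r\wedge t,r\vee t)f$ jointly measurable; $(D(x,y))_{x,y}\subseteq\mathcal B(Y)$ contractions with $(x,y,f)\mapsto D(x,y)f$ measurable. The inhomogeneous $Y$-random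 evolution is $V(s,t)=\big[\prod_{k=1}^{N_s(t)}\Gamma_{x_{k-1}(s)}(T_{k-1}(s),T_k(s))D(x_{k-1}(s),x_k(s))\big]\Gamma_{x(t)}(T_{N_s(t)}(s),t)$ (product ordered left to right, empty product $I$), defined pathwise on $\Delta_J\times\Omega$. $V$ is regular if every $\Gamma_x$ is regular. *)

theory Defs
  imports "HOL-Analysis.Analysis"
begin

text \<open>An inhomogeneous Y-semigroup on the index set J: a map on
  Delta_J = {(s,t) in J^2. s <= t} into bounded operators (values off Delta_J are irrelevant).\<close>
definition inhom_semigroup ::
  "real set \<Rightarrow> (real \<Rightarrow> real \<Rightarrow> ('a::real_normed_vector \<Rightarrow>\<^sub>L 'a)) \<Rightarrow> bool" where
  "inhom_semigroup J G \<longleftrightarrow>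
     (\<forall>t\<in>J. G t t = id_blinfun) \<and>
     (\<forall>s\<in>J. \<forall>r\<in>J. \<forall>t\<in>J. s \<le> r \<and> r \<le> t \<longrightarrow> G s r o\<^sub>L G r t = G s t)"

text \<open>Both one-sided difference quotients converge to L (a one-sided limit whose
  index set is empty, e.g. the left one at t = 0, imposes no condition).\<close>
definition gen_has_limit ::
  "real set \<Rightarrow> (real \<Rightarrow> real \<Rightarrow> ('a::real_normed_vector \<Rightarrow>\<^sub>L 'a)) \<Rightarrow> real \<Rightarrow> 'a \<Rightarrow> 'a \<Rightarrow> bool" where
  "gen_has_limit J G t f L \<longleftrightarrow>
     ((\<lambda>h. (1 / h) *\<^sub>R (G t (t + h) f - f)) \<longlongrightarrow> L) (at 0 within {h. 0 < h \<and> t + h \<in> J}) \<and>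
     ((\<lambda>h. (1 / h) *\<^sub>R (G (t - h) t f - f)) \<longlongrightarrow> L) (at 0 within {h. 0 < h \<and> t - h \<in> J})"

definition gen_dom :: "real set \<Rightarrow> (real \<Rightarrow> real \<Rightarrow> ('a::real_normed_vector \<Rightarrow>\<^sub>L 'a)) \<Rightarrow> real \<Rightarrow> 'a set" where
  "gen_dom J G t = {f. \<exists>L. gen_has_limit J G t f L}"

definition gen_dom_all :: "real set \<Rightarrow> (real \<Rightarrow> real \<Rightarrow> ('a::real_normed_vector \<Rightarrow>\<^sub>L 'a)) \<Rightarrow> 'a set" where
  "gen_dom_all J G = (\<Inter>t\<in>J. gen_dom J G t)"

definition gen :: "real set \<Rightarrow> (real \<Rightarrow> real \<Rightarrow> ('a::real_normed_vector \<Rightarrow>\<^sub>L 'a)) \<Rightarrow> real \<Rightarrow> 'a \<Rightarrow> 'a" where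
  "gen J G t f = (THE L. gen_has_limit J G t f L)"

text \<open>Regularity w.r.t. a Banach space Y1 continuously embedded in Y via the injective
  bounded linear map emb.\<close>
definition regular_semigroup ::
  "real set \<Rightarrow> ('b::real_normed_vector \<Rightarrow>\<^sub>L 'a::{banach,second_countable_topology})
     \<Rightarrow> (real \<Rightarrow> real \<Rightarrow> ('a \<Rightarrow>\<^sub>L 'a)) \<Rightarrow> bool" where
  "regular_semigroup J emb G \<longleftrightarrow>
     range (blinfun_apply emb) \<subseteq> gen_dom_all J G \<and>
     (\<forall>s\<in>J. \<forall>t\<in>J. s \<le> t \<longrightarrow> (\<forall>g. G s t (emb g) \<in> range (blinfun_apply emb))) \<and>
     (\<forall>t\<in>J. \<forall>g. continuous_on {u\<in>J. u \<le> t}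
                  (\<lambda>u. inv (blinfun_apply emb) (G u t (emb g)))) \<and>
     (\<forall>s\<in>J. \<forall>f. continuous_on {u\<in>J. s \<le> u} (\<lambda>u. G s u f)) \<and>
     (\<forall>s\<in>J. \<forall>t\<in>J. s \<le> t \<longrightarrow>
        (\<forall>g. set_integrable lborel {s..t} (\<lambda>u. G s u (gen J G u (emb g)))))"

definition rcll_on :: "real set \<Rightarrow> (real \<Rightarrow> 'a::topological_space) \<Rightarrow> bool" where
  "rcll_on S g \<longleftrightarrow>
     (\<forall>u\<in>S. (g \<longlongrightarrow> g u) (at u within (S \<inter> {u..})) \<and>
             (\<exists>l. (g \<longlongrightarrow> l) (at u within (S \<inter> {..<u}))))"

definition jump_time :: "(nat \<Rightarrow> real) \<Rightarrow> nat \<Rightarrow> real" where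
  "jump_time \<tau> n = (\<Sum>k\<in>{1..n}. \<tau> k)"

definition count_jumps :: "(nat \<Rightarrow> real) \<Rightarrow> real \<Rightarrow> nat" where
  "count_jumps \<tau> t = Sup {n. jump_time \<tau> n \<le> t}"

definition state :: "(nat \<Rightarrow> 'x) \<Rightarrow> (nat \<Rightarrow> real) \<Rightarrow> real \<Rightarrow> 'x" where
  "state xs \<tau> t = xs (count_jumps \<tau> t)"

definition jump_time_from :: "(nat \<Rightarrow> real) \<Rightarrow> real \<Rightarrow> nat \<Rightarrow> real" where
  "jump_time_from \<tau> s n = (if n = 0 then s else jump_time \<tau> (count_jumps \<tau> s + n))"

definition state_from :: "(nat \<Rightarrow> 'x) \<Rightarrow> (nat \<Rightarrow> real) \<Rightarrow> real \<Rightarrow> nat \<Rightarrow> 'x" where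
  "state_from xs \<tau> s n = state xs \<tau> (jump_time_from \<tau> s n)"

fun ordprod :: "nat \<Rightarrow> (nat \<Rightarrow> ('a::real_normed_vector \<Rightarrow>\<^sub>L 'a)) \<Rightarrow> 'a \<Rightarrow>\<^sub>L 'a" where
  "ordprod 0 F = id_blinfun"
| "ordprod (Suc n) F = ordprod n F o\<^sub>L F (Suc n)"

definition random_evolution ::
  "('x \<Rightarrow> real \<Rightarrow> real \<Rightarrow> ('a::real_normed_vector \<Rightarrow>\<^sub>L 'a)) \<Rightarrow> ('x \<Rightarrow> 'x \<Rightarrow> ('a \<Rightarrow>\<^sub>L 'a))
     \<Rightarrow> (nat \<Rightarrow> 'x) \<Rightarrow> (nat \<Rightarrow> real) \<Rightarrow> real \<Rightarrow> real \<Rightarrow> ('a \<Rightarrow>\<^sub>L 'a)" where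
  "random_evolution G D xs \<tau> s t =
     (let m = count_jumps \<tau> t - count_jumps \<tau> s in
      ordprod m (\<lambda>k. G (state_from xs \<tau> s (k - 1)) (jump_time_from \<tau> s (k - 1)) (jump_time_from \<tau> s k)
                      o\<^sub>L D (state_from xs \<tau> s (k - 1)) (state_from xs \<tau> s k))
      o\<^sub>L G (state xs \<tau> t) (jump_time_from \<tau> s m) t)"

end

theory Submission
  imports Defs
begin


lemma bl_assoc: "(a o\<^sub>L b) o\<^sub>L c = a o\<^sub>L (b o\<^sub>L c)"
  by (rule blinfun_eqI) simp

lemma bl_id_left[simp]: "id_blinfun o\<^sub>L a = a"
  by (rule blinfun_eqI) simp

lemma bl_id_right[simp]: "a o\<^sub>L id_blinfun = a"
  by (rule blinfun_eqI) simp

lemma ordprod_add: "ordprod (m + n) F = ordprod m F o\<^sub>L ordprod n (\<lambda>k. F (m + k))"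
  by (induction n) (simp_all add: bl_assoc)

lemma ordprod_Suc_left: "ordprod (Suc n) F = F 1 o\<^sub>L ordprod n (\<lambda>k. F (Suc k))"
  using ordprod_add[of 1 n F] by simp

lemma ordprod_cong: "(\<And>k. 1 \<le> k \<Longrightarrow> k \<le> n \<Longrightarrow> F k = F' k) \<Longrightarrow> ordprod n F = ordprod n F'"
  by (induction n) auto

locale mrp =
  fixes \<tau> :: "nat \<Rightarrow> real"
  assumes tau_pos: "\<forall>k\<ge>1. \<tau> k > 0"
    and N_finite: "\<forall>q\<in>\<rat>. finite {n. jump_time \<tau> n \<le> q}"
begin

abbreviation "T \<equiv> jump_time \<tau>"
abbreviation "N \<equiv> count_jumps \<tau>"
abbreviation "Tf \<equiv> jump_time_from \<tau>"

lemma T_Suc: "T (Suc n) = T n + \<tau> (Suc n)"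
  unfolding jump_time_def by (simp add: sum.cl_ivl_Suc)

lemma T_0: "T 0 = 0" by (simp add: jump_time_def)

lemma T_smono: "strict_mono T"
  by (rule strict_mono_Suc_iff[THEN iffD2]) (use tau_pos in \<open>auto simp: T_Suc\<close>)

lemma T_le_iff: "T m \<le> T n \<longleftrightarrow> m \<le> n"
  using strict_mono_less_eq[OF T_smono] by blast

lemma T_less_iff: "T m < T n \<longleftrightarrow> m < n"
  using strict_mono_less[OF T_smono] by blast

lemma T_nonneg: "0 \<le> T n"
  using T_le_iff[of 0 n] T_0 by simp

lemma fin: "finite {n. T n \<le> t}"
proof -
  have "finite {n. T n \<le> real_of_int \<lceil>t\<rceil>}" using N_finite Rats_of_int by blast
  then show ?thesis
    by (rule finite_subset[rotated]) (auto intro: order_trans le_of_int_ceiling)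
qed

lemma N_iff: assumes "0 \<le> t" shows "T n \<le> t \<longleftrightarrow> n \<le> N t"
proof -
  let ?S = "{n. T n \<le> t}"
  have f: "finite ?S" by (rule fin)
  have ne: "0 \<in> ?S" using assms by (simp add: T_0)
  have N: "N t = Max ?S" unfolding count_jumps_def using ne by (auto simp: Sup_nat_def)
  have M: "Max ?S \<in> ?S" using f ne Max_in by blast
  show ?thesis
  proof
    assume "T n \<le> t" then show "n \<le> N t" using N f by auto
  next
    assume "n \<le> N t"
    then show "T n \<le> t" using M N T_le_iff[of n "N t"] by auto
  qed
qed

lemma N_le: "0 \<le> t \<Longrightarrow> T (N t) \<le> t" using N_iff by blast
lemma N_gt: "0 \<le> t \<Longrightarrow> t < T (Suc (N t))" using N_iff[of t "Suc (N t)"] by auto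
lemma N_T: "N (T n) = n"
  using N_iff[of "T n" n] T_nonneg[of n] N_le[of "T n"] T_le_iff[of "N (T n)" n] by auto
lemma N_eqI: "0 \<le> t \<Longrightarrow> T n \<le> t \<Longrightarrow> t < T (Suc n) \<Longrightarrow> N t = n"
  using N_iff[of t n] N_iff[of t "Suc n"] by auto
lemma N_mono: "0 \<le> s \<Longrightarrow> s \<le> t \<Longrightarrow> N s \<le> N t"
  using N_iff[of t "N s"] N_le[of s] by auto

lemma Tf_0[simp]: "Tf s 0 = s" by (simp add: jump_time_from_def)
lemma Tf_pos: "k \<noteq> 0 \<Longrightarrow> Tf s k = T (N s + k)" by (simp add: jump_time_from_def)

lemma Tf_smono: assumes "0 \<le> s" shows "strict_mono (Tf s)"
proof (rule strict_mono_Suc_iff[THEN iffD2], intro allI)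
  fix n show "Tf s n < Tf s (Suc n)"
  proof (cases n)
    case 0 then show ?thesis using N_gt[OF assms] by (simp add: Tf_pos)
  next
    case (Suc k) then show ?thesis by (simp add: Tf_pos T_less_iff)
  qed
qed

lemma Tf_le_iff: "0 \<le> s \<Longrightarrow> Tf s k \<le> Tf s l \<longleftrightarrow> k \<le> l"
  using strict_mono_less_eq[OF Tf_smono] by blast
lemma Tf_less_iff: "0 \<le> s \<Longrightarrow> Tf s k < Tf s l \<longleftrightarrow> k < l"
  using strict_mono_less[OF Tf_smono] by blast
lemma Tf_ge: "0 \<le> s \<Longrightarrow> s \<le> Tf s k"
  using Tf_le_iff[of s 0 k] by simp

lemma Tf_N: assumes "0 \<le> s" "s \<le> u" shows "Tf s (N u - N s) \<le> u"
proof (cases "N u - N s = 0")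
  case True then show ?thesis using assms by simp
next
  case False
  have "N s \<le> N u" using N_mono assms by blast
  then show ?thesis using False assms N_le[of u] by (simp add: Tf_pos)
qed

lemma Tf_Suc_N: assumes "0 \<le> s" "s \<le> u" shows "u < Tf s (Suc (N u - N s))"
proof -
  have "N s \<le> N u" using N_mono assms by blast
  then show ?thesis using assms N_gt[of u] by (simp add: Tf_pos)
qed

lemma N_int: assumes "0 \<le> s" "Tf s m \<le> u" "u < Tf s (Suc m)" shows "N u = N s + m"
proof -
  have u0: "0 \<le> u" using Tf_ge[OF assms(1), of m] assms by linarith
  show ?thesis
  proof (cases m)
    case 0
    then show ?thesis using assms N_le[of s] by (intro N_eqI) (auto simp: Tf_pos)
  next
    case (Suc k)
    then show ?thesis using assms u0 by (intro N_eqI) (auto simp: Tf_pos)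
  qed
qed

lemma state_from_eq: "0 \<le> s \<Longrightarrow> state_from xs \<tau> s k = xs (N s + k)"
  by (cases k) (simp_all add: state_from_def state_def Tf_pos N_T)

lemma Tf_shift: assumes "0 \<le> s" "s \<le> r" "k \<noteq> 0" shows "Tf s (N r - N s + k) = Tf r k"
proof -
  have "N s \<le> N r" using N_mono assms by blast
  then show ?thesis using assms by (simp add: Tf_pos)
qed

definition Fs where
  "Fs G D xs s k = G (xs (N s + (k - 1))) (Tf s (k - 1)) (Tf s k) o\<^sub>L D (xs (N s + (k - 1))) (xs (N s + k))"

lemma V_eq: assumes "0 \<le> s"
  shows "random_evolution G D xs \<tau> s t =
     ordprod (N t - N s) (Fs G D xs s) o\<^sub>L G (xs (N t)) (Tf s (N t - N s)) t"
  by (simp add: random_evolution_def Let_def Fs_def[abs_def] state_from_eq[OF assms] state_def)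

lemma V_sg:
  assumes J0: "\<forall>x\<in>J. 0 \<le> x" and Jint: "\<forall>a\<in>J. \<forall>b\<in>J. \<forall>c. a \<le> c \<and> c \<le> b \<longrightarrow> c \<in> J"
    and G_sg: "\<forall>x. inhom_semigroup J (G x)"
    and sJ: "s \<in> J" and rJ: "r \<in> J" and tJ: "t \<in> J" and sr: "s \<le> r" and rt: "r \<le> t"
  shows "random_evolution G D xs \<tau> s r o\<^sub>L random_evolution G D xs \<tau> r t = random_evolution G D xs \<tau> s t"
proof -
  have Gc: "\<And>x a b c Z. a\<in>J \<Longrightarrow> b\<in>J \<Longrightarrow> c\<in>J \<Longrightarrow> a\<le>b \<Longrightarrow> b\<le>c \<Longrightarrow>
      G x a b o\<^sub>L (G x b c o\<^sub>L Z) = G x a c o\<^sub>L Z"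
    using G_sg unfolding inhom_semigroup_def by (simp add: bl_assoc[symmetric])
  have s0: "0 \<le> s" and r0: "0 \<le> r" using J0 sJ rJ by auto
  define m1 where "m1 = N r - N s"
  define m2 where "m2 = N t - N r"
  have Nsr: "N s \<le> N r" and Nrt: "N r \<le> N t" using N_mono s0 r0 sr rt by auto
  have m: "N t - N s = m1 + m2" and Nr: "N s + m1 = N r" using Nsr Nrt by (auto simp: m1_def m2_def)
  have Vsr: "random_evolution G D xs \<tau> s r = ordprod m1 (Fs G D xs s) o\<^sub>L G (xs (N r)) (Tf s m1) r"
    using V_eq[OF s0] m1_def by simp
  have Vrt: "random_evolution G D xs \<tau> r t = ordprod m2 (Fs G D xs r) o\<^sub>L G (xs (N t)) (Tf r m2) t"
    using V_eq[OF r0] m2_def by simp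
  have Vst: "random_evolution G D xs \<tau> s t = ordprod (m1 + m2) (Fs G D xs s) o\<^sub>L G (xs (N t)) (Tf s (m1 + m2)) t"
    by (simp only: V_eq[OF s0] m)
  have a1: "Tf s m1 \<le> r" using Tf_N[OF s0 sr] m1_def by simp
  have a0: "s \<le> Tf s m1" using Tf_ge[OF s0] .
  have a1J: "Tf s m1 \<in> J" using Jint sJ rJ a1 a0 by blast
  show ?thesis
  proof (cases m2)
    case 0
    then have "N t = N r" using m2_def Nrt by simp
    then show ?thesis using 0 Vsr Vrt Vst Gc[OF a1J rJ tJ a1 rt, of _ id_blinfun] by (simp add: bl_assoc)
  next
    case (Suc m')
    have Tr1: "Tf r 1 \<le> t"
    proof -
      have "Tf r 1 \<le> Tf r m2" using Tf_le_iff[OF r0] Suc by simp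
      also have "\<dots> \<le> t" using Tf_N[OF r0 rt] m2_def by simp
      finally show ?thesis .
    qed
    have r1: "r \<le> Tf r 1" using Tf_ge[OF r0] .
    have r1J: "Tf r 1 \<in> J" using Jint rJ tJ Tr1 r1 by blast
    have sh1: "Tf s (m1 + 1) = Tf r 1" using Tf_shift[OF s0 sr, of 1] m1_def by simp
    have Fr1: "Fs G D xs r 1 = G (xs (N r)) r (Tf r 1) o\<^sub>L D (xs (N r)) (xs (N r + 1))"
      by (simp add: Fs_def)
    have Fs1: "Fs G D xs s (Suc m1) = G (xs (N r)) (Tf s m1) (Tf r 1) o\<^sub>L D (xs (N r)) (xs (N r + 1))"
      using sh1 Nr by (simp add: Fs_def)
    have key: "G (xs (N r)) (Tf s m1) r o\<^sub>L (Fs G D xs r 1 o\<^sub>L Z) = Fs G D xs s (Suc m1) o\<^sub>L Z" for Z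
      using Gc[OF a1J rJ r1J a1 r1, of "xs (N r)"] Fr1 Fs1 by (simp add: bl_assoc)
    have cong: "ordprod m' (\<lambda>k. Fs G D xs s (m1 + Suc k)) = ordprod m' (\<lambda>k. Fs G D xs r (Suc k))"
    proof (rule ordprod_cong)
      fix k :: nat assume k: "1 \<le> k"
      have e1: "Tf s (m1 + k) = Tf r k" using Tf_shift[OF s0 sr, of k] k m1_def by simp
      have e2: "Tf s (m1 + Suc k) = Tf r (Suc k)" using Tf_shift[OF s0 sr, of "Suc k"] m1_def by simp
      show "Fs G D xs s (m1 + Suc k) = Fs G D xs r (Suc k)"
        using e1 e2 Nr by (simp add: Fs_def add.assoc[symmetric])
    qed
    have sh2: "Tf s (m1 + m2) = Tf r m2" using Tf_shift[OF s0 sr, of m2] m1_def Suc by simp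
    have "ordprod (m1 + m2) (Fs G D xs s) =
        ordprod m1 (Fs G D xs s) o\<^sub>L (Fs G D xs s (Suc m1) o\<^sub>L ordprod m' (\<lambda>k. Fs G D xs r (Suc k)))"
      using ordprod_add[of m1 m2 "Fs G D xs s"] ordprod_Suc_left[of m' "\<lambda>k. Fs G D xs s (m1 + k)"] Suc cong
      by simp
    moreover have "ordprod m2 (Fs G D xs r) = Fs G D xs r 1 o\<^sub>L ordprod m' (\<lambda>k. Fs G D xs r (Suc k))"
      using ordprod_Suc_left Suc by simp
    ultimately show ?thesis unfolding Vsr Vrt Vst sh2 by (simp only: bl_assoc key)
  qed
qed

definition Wf where
  "Wf G D xs s m u = ordprod m (Fs G D xs s) o\<^sub>L G (xs (N s + m)) (Tf s m) u"

lemma V_on_int: assumes "0 \<le> s" "Tf s m \<le> u" "u < Tf s (Suc m)"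
  shows "random_evolution G D xs \<tau> s u = Wf G D xs s m u"
  unfolding V_eq[OF assms(1)] N_int[OF assms] Wf_def by simp

lemma W_cont:
  fixes G :: "'x \<Rightarrow> real \<Rightarrow> real \<Rightarrow> ('a::real_normed_vector \<Rightarrow>\<^sub>L 'a)"
  assumes reg: "\<forall>x. \<forall>a\<in>J. \<forall>f. continuous_on {u\<in>J. a \<le> u} (\<lambda>u. G x a u f)"
    and aJ: "Tf s m \<in> J"
  shows "continuous_on {u\<in>J. Tf s m \<le> u} (\<lambda>u. Wf G D xs s m u g)"
  unfolding Wf_def blinfun_apply_blinfun_compose
  by (rule bounded_linear.continuous_on[OF blinfun.bounded_linear_right]) (rule reg[rule_format, OF aJ])

lemma left_lim:
  fixes G :: "'x \<Rightarrow> real \<Rightarrow> real \<Rightarrow> ('a::real_normed_vector \<Rightarrow>\<^sub>L 'a)"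
  assumes J0: "\<forall>x\<in>J. 0 \<le> x" and Jint: "\<forall>a\<in>J. \<forall>b\<in>J. \<forall>c. a \<le> c \<and> c \<le> b \<longrightarrow> c \<in> J"
    and reg: "\<forall>x. \<forall>a\<in>J. \<forall>f. continuous_on {u\<in>J. a \<le> u} (\<lambda>u. G x a u f)"
    and sJ: "s \<in> J" and uJ: "u \<in> J" and lt: "Tf s m < u" and le: "u \<le> Tf s (Suc m)"
  shows "((\<lambda>v. random_evolution G D xs \<tau> s v g) \<longlongrightarrow> Wf G D xs s m u g)
           (at u within {v\<in>J. s \<le> v \<and> v < u})"
proof -
  have s0: "0 \<le> s" using J0 sJ by auto
  have a0: "s \<le> Tf s m" using Tf_ge[OF s0] .
  have aJ: "Tf s m \<in> J" using Jint[rule_format, OF sJ uJ, of "Tf s m"] a0 lt by simp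
  let ?A = "{v\<in>J. Tf s m \<le> v}"
  let ?B = "{v\<in>J. Tf s m \<le> v \<and> v < u}"
  have c: "continuous_on ?A (\<lambda>v. Wf G D xs s m v g)" by (rule W_cont[OF reg aJ])
  have uA: "u \<in> ?A" using uJ lt by simp
  have "((\<lambda>v. Wf G D xs s m v g) \<longlongrightarrow> Wf G D xs s m u g) (at u within ?A)"
    by (rule c[unfolded continuous_on_def, rule_format, OF uA])
  then have "((\<lambda>v. Wf G D xs s m v g) \<longlongrightarrow> Wf G D xs s m u g) (at u within ?B)"
    by (rule tendsto_within_subset) auto
  then have "((\<lambda>v. random_evolution G D xs \<tau> s v g) \<longlongrightarrow> Wf G D xs s m u g) (at u within ?B)"
  proof (rule Lim_transform_within[where d=1])
    fix v assume "v \<in> ?B"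
    then have h: "Tf s m \<le> v" "v < Tf s (Suc m)" using le by auto
    have "random_evolution G D xs \<tau> s v = Wf G D xs s m v" by (rule V_on_int[OF s0 h])
    then show "Wf G D xs s m v g = random_evolution G D xs \<tau> s v g" by simp
  qed simp
  moreover have "\<forall>\<^sub>F v in at u. (v \<in> ?B) = (v \<in> {v\<in>J. s \<le> v \<and> v < u})"
  proof -
    have "\<forall>\<^sub>F v in at u. Tf s m < v"
      using order_tendstoD(1)[OF tendsto_ident_at lt] .
    then show ?thesis by (rule eventually_mono) (use a0 in auto)
  qed
  ultimately show ?thesis by (rule Lim_transform_within_set)
qed

end

theorem proposition3p3:
  fixes J :: "real set"
    and emb :: "'y1::{banach,second_countable_topology} \<Rightarrow>\<^sub>L 'y::{banach,second_countable_topology}"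
    and G :: "'x::finite \<Rightarrow> real \<Rightarrow> real \<Rightarrow> ('y \<Rightarrow>\<^sub>L 'y)"
    and D :: "'x \<Rightarrow> 'x \<Rightarrow> ('y \<Rightarrow>\<^sub>L 'y)"
    and xs :: "nat \<Rightarrow> 'x"
    and \<tau> :: "nat \<Rightarrow> real"
    and s :: real
  assumes J: "J = {0..} \<or> (\<exists>Tinf>0. J = {0..Tinf})"
    and emb_inj: "inj (blinfun_apply emb)"
    and G_sg: "\<forall>x. inhom_semigroup J (G x)"
    and G_meas: "(\<lambda>(r, t, x, f). G x (min r t) (max r t) f) \<in> borel_measurable
                   (restrict_space borel J \<Otimes>\<^sub>M restrict_space borel J \<Otimes>\<^sub>M count_space UNIV \<Otimes>\<^sub>M borel)"
    and D_contr: "\<forall>x y. norm (D x y) \<le> 1"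
    and D_meas: "(\<lambda>(x, y, f). D x y f) \<in> borel_measurable
                   (count_space UNIV \<Otimes>\<^sub>M count_space UNIV \<Otimes>\<^sub>M borel)"
    and tau_pos: "\<forall>k\<ge>1. \<tau> k > 0"
    and N_finite: "\<forall>q\<in>\<rat>. finite {n. jump_time \<tau> n \<le> q}"
    and s: "s \<in> J"
  shows "inhom_semigroup J (random_evolution G D xs \<tau>) \<and>
         ((\<forall>x. regular_semigroup J emb (G x)) \<longrightarrow>
            (\<forall>f. rcll_on {u\<in>J. s \<le> u} (\<lambda>u. random_evolution G D xs \<tau> s u f)) \<and>
            (\<forall>f. \<forall>u\<in>J. s < u \<and> u \<notin> range (jump_time_from \<tau> s) \<longrightarrow>
               ((\<lambda>v. random_evolution G D xs \<tau> s v f) \<longlongrightarrow> random_evolution G D xs \<tau> s u f)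
                 (at u within {v\<in>J. s \<le> v \<and> v < u})) \<and>
            (\<forall>f n. jump_time_from \<tau> s (Suc n) \<in> J \<longrightarrow>
               ((\<lambda>v. random_evolution G D xs \<tau> s v
                        (D (state_from xs \<tau> s n) (state_from xs \<tau> s (Suc n)) f))
                  \<longlongrightarrow> random_evolution G D xs \<tau> s (jump_time_from \<tau> s (Suc n)) f)
                 (at (jump_time_from \<tau> s (Suc n)) within {v\<in>J. s \<le> v \<and> v < jump_time_from \<tau> s (Suc n)})))"
proof -
  interpret mrp \<tau> using tau_pos N_finite by unfold_locales auto
  have J0: "\<forall>x\<in>J. 0 \<le> x" using J by auto
  have Jint: "\<forall>a\<in>J. \<forall>b\<in>J. \<forall>c. a \<le> c \<and> c \<le> b \<longrightarrow> c \<in> J" using J by auto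
  have s0: "0 \<le> s" using J0 s by blast
  have Gid: "\<And>x t. t \<in> J \<Longrightarrow> G x t t = id_blinfun" using G_sg unfolding inhom_semigroup_def by blast
  have sg: "inhom_semigroup J (random_evolution G D xs \<tau>)"
    unfolding inhom_semigroup_def
  proof (intro conjI ballI impI)
    fix t assume tJ: "t \<in> J"
    have t0: "0 \<le> t" using J0 tJ by blast
    show "random_evolution G D xs \<tau> t t = id_blinfun"
      unfolding V_eq[OF t0] using Gid[OF tJ] by simp
  next
    fix a r t assume "a \<in> J" "r \<in> J" "t \<in> J" "a \<le> r \<and> r \<le> t"
    then show "random_evolution G D xs \<tau> a r o\<^sub>L random_evolution G D xs \<tau> r t = random_evolution G D xs \<tau> a t"
      using V_sg[OF J0 Jint G_sg] by blast
  qed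
  moreover have "(\<forall>x. regular_semigroup J emb (G x)) \<longrightarrow>
            (\<forall>f. rcll_on {u\<in>J. s \<le> u} (\<lambda>u. random_evolution G D xs \<tau> s u f)) \<and>
            (\<forall>f. \<forall>u\<in>J. s < u \<and> u \<notin> range (jump_time_from \<tau> s) \<longrightarrow>
               ((\<lambda>v. random_evolution G D xs \<tau> s v f) \<longlongrightarrow> random_evolution G D xs \<tau> s u f)
                 (at u within {v\<in>J. s \<le> v \<and> v < u})) \<and>
            (\<forall>f n. jump_time_from \<tau> s (Suc n) \<in> J \<longrightarrow>
               ((\<lambda>v. random_evolution G D xs \<tau> s v
                        (D (state_from xs \<tau> s n) (state_from xs \<tau> s (Suc n)) f))
                  \<longlongrightarrow> random_evolution G D xs \<tau> s (jump_time_from \<tau> s (Suc n)) f)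
                 (at (jump_time_from \<tau> s (Suc n)) within {v\<in>J. s \<le> v \<and> v < jump_time_from \<tau> s (Suc n)}))" (is "_ \<longrightarrow> ?C")
  proof
    assume R: "\<forall>x. regular_semigroup J emb (G x)"
    have reg: "\<forall>x. \<forall>a\<in>J. \<forall>f. continuous_on {u\<in>J. a \<le> u} (\<lambda>u. G x a u f)"
      using R unfolding regular_semigroup_def by blast
    have basic: "Tf s (N u - N s) \<le> u \<and> u < Tf s (Suc (N u - N s)) \<and> Tf s (N u - N s) \<in> J"
      if uJ: "u \<in> J" and su: "s \<le> u" for u
    proof -
      have a: "Tf s (N u - N s) \<le> u" "u < Tf s (Suc (N u - N s))"
        using Tf_N[OF s0 su] Tf_Suc_N[OF s0 su] by auto
      have "s \<le> Tf s (N u - N s)" by (rule Tf_ge[OF s0])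
      then have "Tf s (N u - N s) \<in> J" using Jint[rule_format, OF s uJ, of "Tf s (N u - N s)"] a by simp
      then show ?thesis using a by simp
    qed
    have right: "((\<lambda>v. random_evolution G D xs \<tau> s v f) \<longlongrightarrow> random_evolution G D xs \<tau> s u f)
        (at u within {u\<in>J. s \<le> u} \<inter> {u..})" if uJ: "u \<in> J" and su: "s \<le> u" for u f
    proof -
      define m where "m = N u - N s"
      have a: "Tf s m \<le> u" "u < Tf s (Suc m)" and aJ: "Tf s m \<in> J" using basic[OF uJ su] m_def by auto
      let ?A = "{v\<in>J. Tf s m \<le> v}"
      have c: "continuous_on ?A (\<lambda>v. Wf G D xs s m v f)" by (rule W_cont[OF reg aJ])
      have uA: "u \<in> ?A" using uJ a by simp
      have "((\<lambda>v. Wf G D xs s m v f) \<longlongrightarrow> Wf G D xs s m u f) (at u within ?A)"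
        by (rule c[unfolded continuous_on_def, rule_format, OF uA])
      then have "((\<lambda>v. Wf G D xs s m v f) \<longlongrightarrow> Wf G D xs s m u f) (at u within {u\<in>J. s \<le> u} \<inter> {u..})"
        by (rule tendsto_within_subset) (use a in auto)
      then have "((\<lambda>v. random_evolution G D xs \<tau> s v f) \<longlongrightarrow> Wf G D xs s m u f) (at u within {u\<in>J. s \<le> u} \<inter> {u..})"
      proof (rule Lim_transform_within[where d="Tf s (Suc m) - u"])
        fix v assume v: "v \<in> {u\<in>J. s \<le> u} \<inter> {u..}" "dist v u < Tf s (Suc m) - u"
        then have h: "Tf s m \<le> v" "v < Tf s (Suc m)" using a by (auto simp: dist_real_def)
        have "random_evolution G D xs \<tau> s v = Wf G D xs s m v" by (rule V_on_int[OF s0 h])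
        then show "Wf G D xs s m v f = random_evolution G D xs \<tau> s v f" by simp
      qed (use a in simp)
      moreover have "random_evolution G D xs \<tau> s u = Wf G D xs s m u" by (rule V_on_int[OF s0 a])
      ultimately show ?thesis by simp
    qed
    have left: "\<exists>l. ((\<lambda>v. random_evolution G D xs \<tau> s v f) \<longlongrightarrow> l) (at u within {v\<in>J. s \<le> v \<and> v < u})"
      if uJ: "u \<in> J" and su: "s \<le> u" for u f
    proof -
      define m where "m = N u - N s"
      have a: "Tf s m \<le> u" "u < Tf s (Suc m)" using basic[OF uJ su] m_def by auto
      show ?thesis
      proof (cases "Tf s m < u")
        case True
        show ?thesis by (rule exI, rule left_lim[OF J0 Jint reg s uJ True]) (use a in simp)
      next
        case False
        then have eq: "Tf s m = u" using a by simp
        show ?thesis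
        proof (cases m)
          case 0
          then have "{v\<in>J. s \<le> v \<and> v < u} = {}" using eq by auto
          then show ?thesis by (metis at_within_empty tendsto_bot)
        next
          case (Suc m')
          have l1: "Tf s m' < u" using eq Suc Tf_less_iff[OF s0, of m' m] by simp
          have l2: "u \<le> Tf s (Suc m')" using eq Suc by simp
          show ?thesis by (rule exI, rule left_lim[OF J0 Jint reg s uJ l1 l2])
        qed
      qed
    qed
    have P1: "\<forall>f. rcll_on {u\<in>J. s \<le> u} (\<lambda>u. random_evolution G D xs \<tau> s u f)"
    proof (intro allI)
      fix f
      show "rcll_on {u\<in>J. s \<le> u} (\<lambda>u. random_evolution G D xs \<tau> s u f)"
        unfolding rcll_on_def
      proof (intro ballI conjI)
        fix u assume "u \<in> {u\<in>J. s \<le> u}"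
        then have uJ: "u \<in> J" and su: "s \<le> u" by auto
        show "((\<lambda>u. random_evolution G D xs \<tau> s u f) \<longlongrightarrow> random_evolution G D xs \<tau> s u f)
            (at u within {u\<in>J. s \<le> u} \<inter> {u..})" by (rule right[OF uJ su])
        have e: "{u\<in>J. s \<le> u} \<inter> {..<u} = {v\<in>J. s \<le> v \<and> v < u}" by auto
        show "\<exists>l. ((\<lambda>u. random_evolution G D xs \<tau> s u f) \<longlongrightarrow> l) (at u within {u\<in>J. s \<le> u} \<inter> {..<u})"
          unfolding e by (rule left[OF uJ su])
      qed
    qed
    have P2: "\<forall>f. \<forall>u\<in>J. s < u \<and> u \<notin> range (jump_time_from \<tau> s) \<longrightarrow>
               ((\<lambda>v. random_evolution G D xs \<tau> s v f) \<longlongrightarrow> random_evolution G D xs \<tau> s u f)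
                 (at u within {v\<in>J. s \<le> v \<and> v < u})"
    proof (intro allI ballI impI)
      fix f u assume uJ: "u \<in> J" and h: "s < u \<and> u \<notin> range (jump_time_from \<tau> s)"
      have su: "s \<le> u" using h by simp
      define m where "m = N u - N s"
      have a: "Tf s m \<le> u" "u < Tf s (Suc m)" using basic[OF uJ su] m_def by auto
      have "Tf s m \<noteq> u" using h by blast
      then have lt: "Tf s m < u" using a by simp
      have "random_evolution G D xs \<tau> s u = Wf G D xs s m u" by (rule V_on_int[OF s0 a])
      then show "((\<lambda>v. random_evolution G D xs \<tau> s v f) \<longlongrightarrow> random_evolution G D xs \<tau> s u f)
                 (at u within {v\<in>J. s \<le> v \<and> v < u})"
        using left_lim[OF J0 Jint reg s uJ lt, of D xs f] a by simp
    qed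
    have P3: "\<forall>f n. jump_time_from \<tau> s (Suc n) \<in> J \<longrightarrow>
               ((\<lambda>v. random_evolution G D xs \<tau> s v
                        (D (state_from xs \<tau> s n) (state_from xs \<tau> s (Suc n)) f))
                  \<longlongrightarrow> random_evolution G D xs \<tau> s (jump_time_from \<tau> s (Suc n)) f)
                 (at (jump_time_from \<tau> s (Suc n)) within {v\<in>J. s \<le> v \<and> v < jump_time_from \<tau> s (Suc n)})"
    proof (intro allI impI)
      fix f n assume uJ: "Tf s (Suc n) \<in> J"
      let ?u = "Tf s (Suc n)"
      have l1: "Tf s n < ?u" using Tf_less_iff[OF s0] by simp
      have L: "((\<lambda>v. random_evolution G D xs \<tau> s v (D (state_from xs \<tau> s n) (state_from xs \<tau> s (Suc n)) f))
           \<longlongrightarrow> Wf G D xs s n ?u (D (state_from xs \<tau> s n) (state_from xs \<tau> s (Suc n)) f))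
           (at ?u within {v\<in>J. s \<le> v \<and> v < ?u})"
        by (rule left_lim[OF J0 Jint reg s uJ l1]) simp
      have b1: "Tf s (Suc n) \<le> ?u" "?u < Tf s (Suc (Suc n))" using Tf_less_iff[OF s0] by auto
      have "random_evolution G D xs \<tau> s ?u = Wf G D xs s (Suc n) ?u" by (rule V_on_int[OF s0 b1])
      also have "\<dots> = ordprod n (Fs G D xs s) o\<^sub>L Fs G D xs s (Suc n)"
        unfolding Wf_def using Gid[OF uJ] by simp
      finally have "random_evolution G D xs \<tau> s ?u f =
          Wf G D xs s n ?u (D (state_from xs \<tau> s n) (state_from xs \<tau> s (Suc n)) f)"
        by (simp add: Wf_def Fs_def state_from_eq[OF s0])
      then show "((\<lambda>v. random_evolution G D xs \<tau> s v
                        (D (state_from xs \<tau> s n) (state_from xs \<tau> s (Suc n)) f))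
                  \<longlongrightarrow> random_evolution G D xs \<tau> s ?u f)
                 (at ?u within {v\<in>J. s \<le> v \<and> v < ?u})" using L by simp
    qed
    show ?C
      using P1 P2 P3 by blast
  qed
  ultimately show ?thesis by blast
qed

end
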